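(* Let $H(s)=K\,\frac{\prod_{i=1}^{m}(s-z_i)}{\prod_{i=1}^{n}(s-p_i)}$ be a rational function with real coefficients, where $K\neq 0$ is real, $z\in\mathbb{C}^m$ are its zeros and $p\in\mathbb{C}^n$ its poles. If $H$ is logarithmically completely monotonic, then: (a) $n\geq m$; (b) $\max_i \operatorname{Re}(p_i)\geq \max_i \operatorname{Re}(z_i)$; (c) if $n=m$, then $\sum_{i=1}^n p_i\geq \sum_{i=1}^m z_i$.
   Context: Let $\sigma(H)=\max_i \operatorname{Re}(p_i)$. A function $H$ is logarithmically completely monotonic (LCM) on $I\subseteq\mathbb{R}$ if $H(s)>0$ and $(-1)^k[\log H(s)]^{(k)}\geq 0$ for all $k\in\{1,2,\dots\}$ and all $s\in I$. "$H$ is LCM" means LCM on $I=(\sigma(H),+\infty)$. *)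

theory Defs
  imports "HOL-Analysis.Analysis" "HOL-Computational_Algebra.Polynomial"
begin

definition ratfun :: "real \<Rightarrow> complex list \<Rightarrow> complex list \<Rightarrow> complex \<Rightarrow> complex" where
  "ratfun K z p s = complex_of_real K * (\<Prod>i<length z. s - z ! i) / (\<Prod>i<length p. s - p ! i)"

definition root_poly :: "complex list \<Rightarrow> complex poly" where
  "root_poly r = (\<Prod>i<length r. [:- (r ! i), 1:])"

definition real_poly :: "complex poly \<Rightarrow> bool" where
  "real_poly q \<longleftrightarrow> (\<forall>k. coeff q k \<in> \<real>)"

definition max_re :: "complex list \<Rightarrow> ereal" where
  "max_re r = (if r = [] then -\<infinity> else Max ((\<lambda>c. ereal (Re c)) ` set r))"

definition LCM_on :: "(real \<Rightarrow> real) \<Rightarrow> real set \<Rightarrow> bool" where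
  "LCM_on H I \<longleftrightarrow> (\<forall>s\<in>I. H s > 0) \<and>
     (\<forall>k::nat. k \<ge> 1 \<longrightarrow> (\<forall>s\<in>I. (-1) ^ k * (deriv ^^ k) (\<lambda>t. ln (H t)) s \<ge> 0))"

end

theory Submission
  imports Defs
begin

lemma deriv_term:
  assumes "complex_of_real t \<noteq> w"
  shows "((\<lambda>t. Re (inverse ((complex_of_real t - w)^k))) has_real_derivative
          Re (- of_nat k * inverse ((complex_of_real t - w)^(Suc k)))) (at t)"
proof -
  define x where "x = complex_of_real t"
  have ne: "x - w \<noteq> 0" using assms by (simp add: x_def)
  have d1: "((\<lambda>x. (x - w)^k) has_field_derivative of_nat k * (x - w)^(k-1)) (at x)"
    by (auto intro!: derivative_eq_intros)
  have d2: "((\<lambda>x. inverse ((x - w)^k)) has_field_derivative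
      (- ((of_nat k * (x - w)^(k-1)) * inverse (((x - w)^k) ^ Suc (Suc 0))))) (at x)"
    by (rule DERIV_inverse_fun[OF d1]) (use ne in simp)
  have eq: "- ((of_nat k * (x - w)^(k-1)) * inverse (((x - w)^k) ^ Suc (Suc 0))) = - of_nat k * inverse ((x - w)^Suc k)"
  proof (cases k)
    case 0 then show ?thesis by simp
  next
    case (Suc j)
    obtain y where y: "y = x - w" by blast
    have "y \<noteq> 0" using ne y by simp
    then have "- ((of_nat k * y^(k-1)) * inverse ((y^k) ^ Suc (Suc 0))) = - of_nat k * inverse (y^Suc k)"
      using Suc by (simp add: field_simps power_Suc power2_eq_square)
    then show ?thesis using y by simp
  qed
  from has_field_derivative_Re[OF has_vector_derivative_real_field[OF d2[unfolded eq, unfolded x_def]]]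
  show ?thesis by (simp only: )
qed

lemma deriv_lncmod:
  assumes "complex_of_real t \<noteq> w"
  shows "((\<lambda>t. ln (cmod (complex_of_real t - w))) has_real_derivative Re (inverse (complex_of_real t - w))) (at t)"
proof -
  have pos: "(t - Re w)^2 + (Im w)^2 > 0"
  proof -
    have "\<not> (t - Re w = 0 \<and> Im w = 0)" using assms by (auto simp: complex_eq_iff)
    thus ?thesis by (simp add: sum_power2_gt_zero_iff)
  qed
  have e: "(\<lambda>t. ln (cmod (complex_of_real t - w))) = (\<lambda>t. ln (sqrt ((t - Re w)^2 + (Im w)^2)))"
    by (simp add: cmod_def)
  define q where "q = (t - Re w)^2 + (Im w)^2"
  have sq: "sqrt q * sqrt q = q" using pos by (simp add: q_def)
  have sp: "sqrt q > 0" using pos by (simp add: q_def)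
  have d0: "((\<lambda>t. (t - Re w)^2 + (Im w)^2) has_real_derivative 2*(t - Re w)) (at t)"
    by (auto intro!: derivative_eq_intros)
  note d1 = DERIV_chain2[OF DERIV_real_sqrt[OF pos] d0]
  note d = DERIV_chain2[OF DERIV_ln[OF sp[unfolded q_def]] d1]
  have r: "Re (inverse (complex_of_real t - w)) = (t - Re w) / q"
    by (simp add: q_def power2_eq_square)
  have "inverse (sqrt ((t - Re w)^2 + (Im w)^2)) * (inverse (sqrt ((t - Re w)^2 + (Im w)^2)) / 2 * (2 * (t - Re w)))
      = (t - Re w) / q"
    unfolding q_def[symmetric]
  proof -
    have g: "inverse s * (inverse s / 2 * (2 * a)) = a / (s * s)" if "s \<noteq> 0" for s a :: real
      using that by (simp add: field_simps)
    have "inverse (sqrt q) * (inverse (sqrt q) / 2 * (2 * (t - Re w))) = (t - Re w) / (sqrt q * sqrt q)"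
      using sp by (intro g) simp
    then show "inverse (sqrt q) * (inverse (sqrt q) / 2 * (2 * (t - Re w))) = (t - Re w) / q" using sq pos[folded q_def] by (simp add: field_simps)
  qed
  then show ?thesis unfolding e r by (rule DERIV_cong[OF d])
qed

lemma max_re_less: "max_re r < ereal t \<longleftrightarrow> (\<forall>w\<in>set r. Re w < t)"
  by (auto simp: max_re_def)

lemma open_I: "open {s. max_re r < ereal s}"
proof -
  have "{s. max_re r < ereal s} = (\<Inter>w\<in>set r. {Re w<..})"
    by (auto simp: max_re_less)
  then show ?thesis by (auto intro!: open_INT)
qed

lemma poly_root_poly: "poly (root_poly r) x = (\<Prod>i<length r. x - r ! i)"
  by (simp add: root_poly_def poly_prod)

lemma real_poly_Reals: "real_poly q \<Longrightarrow> poly q (complex_of_real t) \<in> \<real>"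
  unfolding poly_altdef real_poly_def
  by (intro sum_in_Reals Reals_mult Reals_power) auto

lemma ratfun_alt: "ratfun K z p x = complex_of_real K * poly (root_poly z) x / poly (root_poly p) x"
  by (simp add: ratfun_def poly_root_poly)

locale setting =
  fixes K :: real and z p :: "complex list"
  assumes rz: "real_poly (root_poly z)" and rp: "real_poly (root_poly p)"
    and lcm: "LCM_on (\<lambda>s. Re (ratfun K z p (complex_of_real s))) {s. ereal s > max_re p}"
begin

abbreviation "I \<equiv> {s. ereal s > max_re p}"

definition f where "f = (\<lambda>t. ln (Re (ratfun K z p (complex_of_real t))))"

definition G where "G = (\<lambda>t. ln \<bar>K\<bar> + (\<Sum>j<length z. ln (cmod (complex_of_real t - z ! j)))
    - (\<Sum>i<length p. ln (cmod (complex_of_real t - p ! i))))"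

definition D where "D k t = (\<Sum>j<length z. Re (inverse ((complex_of_real t - z ! j) ^ k)))
    - (\<Sum>i<length p. Re (inverse ((complex_of_real t - p ! i) ^ k)))"

lemma Hpos: "t \<in> I \<Longrightarrow> Re (ratfun K z p (complex_of_real t)) > 0"
  using lcm unfolding LCM_on_def by auto

lemma p_ne: "t \<in> I \<Longrightarrow> i < length p \<Longrightarrow> complex_of_real t \<noteq> p ! i"
  using max_re_less[of p t] by (auto simp: max_re_less) (metis nth_mem of_real_Re less_irrefl Re_complex_of_real)

lemma z_ne: assumes "t \<in> I" "j < length z" shows "complex_of_real t \<noteq> z ! j"
proof
  assume "complex_of_real t = z ! j"
  then have "(\<Prod>j<length z. complex_of_real t - z ! j) = 0"
    using assms(2) by (auto intro!: prod_zero)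
  then have "ratfun K z p (complex_of_real t) = 0" by (simp add: ratfun_def)
  with Hpos[OF assms(1)] show False by simp
qed

lemma f_eq_G: assumes "t \<in> I" shows "f t = G t"
proof -
  let ?R = "ratfun K z p (complex_of_real t)"
  have "?R \<in> \<real>" unfolding ratfun_alt
    using real_poly_Reals[OF rz] real_poly_Reals[OF rp] by auto
  then have "Re ?R = cmod ?R" using Hpos[OF assms]
    by (metis Re_complex_of_real Reals_cases abs_of_pos norm_of_real)
  also have "\<dots> = \<bar>K\<bar> * (\<Prod>j<length z. cmod (complex_of_real t - z ! j)) / (\<Prod>i<length p. cmod (complex_of_real t - p ! i))"
    by (simp add: ratfun_def norm_mult norm_divide prod_norm)
  finally have e: "Re ?R = \<dots>" .
  have nz: "(\<Prod>j<length z. cmod (complex_of_real t - z ! j)) \<noteq> 0"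
    using z_ne[OF assms] by (simp add: prod_zero_iff)
  have np: "(\<Prod>i<length p. cmod (complex_of_real t - p ! i)) \<noteq> 0"
    using p_ne[OF assms] by (simp add: prod_zero_iff)
  have lz: "ln (\<Prod>j<length z. cmod (complex_of_real t - z ! j)) = (\<Sum>j<length z. ln (cmod (complex_of_real t - z ! j)))"
    by (rule ln_prod) (use z_ne[OF assms] in auto)
  have lp: "ln (\<Prod>i<length p. cmod (complex_of_real t - p ! i)) = (\<Sum>i<length p. ln (cmod (complex_of_real t - p ! i)))"
    by (rule ln_prod) (use p_ne[OF assms] in auto)
  have "K \<noteq> 0" using Hpos[OF assms] by (auto simp: ratfun_def)
  then show ?thesis unfolding f_def G_def e
    using nz np by (simp add: ln_div ln_mult lz lp)
qed

lemma ev_I: "t \<in> I \<Longrightarrow> eventually (\<lambda>s. s \<in> I) (nhds t)"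
  using open_I[of p] by (intro eventually_nhds_in_open) auto

lemma G_deriv: assumes "t \<in> I" shows "(G has_real_derivative D 1 t) (at t)"
proof -
  have "(G has_real_derivative (0 + (\<Sum>j<length z. Re (inverse (complex_of_real t - z ! j)))
      - (\<Sum>i<length p. Re (inverse (complex_of_real t - p ! i))))) (at t)"
    unfolding G_def
    by (intro DERIV_diff DERIV_add DERIV_const DERIV_sum deriv_lncmod z_ne p_ne assms) auto
  then show ?thesis by (simp add: D_def)
qed

lemma D_fun: "D k = (\<lambda>t. (\<Sum>j<length z. Re (inverse ((complex_of_real t - z ! j) ^ k)))
    - (\<Sum>i<length p. Re (inverse ((complex_of_real t - p ! i) ^ k))))"
  by (rule ext) (simp add: D_def)

lemma D_deriv: assumes "t \<in> I" shows "(D k has_real_derivative (- real k * D (Suc k) t)) (at t)"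
proof -
  have "(D k has_real_derivative ((\<Sum>j<length z. Re (- of_nat k * inverse ((complex_of_real t - z ! j) ^ Suc k)))
      - (\<Sum>i<length p. Re (- of_nat k * inverse ((complex_of_real t - p ! i) ^ Suc k))))) (at t)"
    unfolding D_fun
    by (intro DERIV_diff DERIV_sum deriv_term z_ne p_ne assms) auto
  moreover have h: "\<And>x::complex. Re (- of_nat k * x) = - real k * Re x" by simp
  ultimately show ?thesis
    unfolding h sum_distrib_left[symmetric] D_def right_diff_distrib by simp
qed

lemma derivs: "t \<in> I \<Longrightarrow> (deriv ^^ (Suc j)) f t = (-1) ^ j * fact j * D (Suc j) t"
proof (induction j arbitrary: t)
  case 0
  have "(deriv ^^ (Suc 0)) f t = deriv f t" by simp
  also have "\<dots> = deriv G t"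
    by (rule deriv_cong_ev[OF eventually_mono[OF ev_I[OF 0]] refl]) (use f_eq_G in auto)
  also have "\<dots> = D 1 t" by (rule DERIV_imp_deriv[OF G_deriv[OF 0]])
  finally show ?case by simp
next
  case (Suc j)
  have "(deriv ^^ (Suc (Suc j))) f t = deriv ((deriv ^^ (Suc j)) f) t" by simp
  also have "\<dots> = deriv (\<lambda>s. (-1) ^ j * fact j * D (Suc j) s) t"
    by (rule deriv_cong_ev[OF eventually_mono[OF ev_I[OF Suc.prems]] refl]) (use Suc.IH in auto)
  also have "\<dots> = (-1) ^ j * fact j * (- real (Suc j) * D (Suc (Suc j)) t)"
    by (rule DERIV_imp_deriv[OF DERIV_cmult[OF D_deriv[OF Suc.prems]]])
  also have "\<dots> = (-1) ^ Suc j * fact (Suc j) * D (Suc (Suc j)) t"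
    by (simp add: algebra_simps)
  finally show ?case .
qed

lemma moment: assumes "t \<in> I" "k \<ge> 1"
  shows "(\<Sum>j<length z. Re (inverse ((complex_of_real t - z ! j) ^ k)))
    \<le> (\<Sum>i<length p. Re (inverse ((complex_of_real t - p ! i) ^ k)))"
proof -
  obtain j where k: "k = Suc j" using assms(2) by (cases k) auto
  have "(-1) ^ k * (deriv ^^ k) f t \<ge> 0"
    using lcm assms unfolding LCM_on_def f_def by auto
  also have "(-1) ^ k * (deriv ^^ k) f t = - (fact j * D k t)"
    unfolding k derivs[OF assms(1)] by (simp add: power_mult_distrib[symmetric])
  finally have "fact j * D k t \<le> 0" by simp
  then have "D k t \<le> 0" using fact_gt_zero[of j, where 'a=real] by (auto simp: mult_le_0_iff)
  then show ?thesis by (simp add: D_def)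
qed


lemma ev_I_top: "eventually (\<lambda>t. t \<in> I) at_top"
proof -
  have "eventually (\<lambda>t. \<forall>w\<in>set p. Re w < t) at_top"
    by (intro eventually_ball_finite ballI eventually_gt_at_top) auto
  then show ?thesis by eventually_elim (simp add: max_re_less)
qed

end

lemma inv_lim: "((\<lambda>t. inverse (complex_of_real t - w)) \<longlongrightarrow> 0) at_top"
proof -
  have l1: "filterlim (\<lambda>t. (- cmod w) + t) at_top at_top"
    by (rule filterlim_tendsto_add_at_top[OF tendsto_const filterlim_ident])
  have l2: "\<forall>t. (- cmod w) + t \<le> cmod (complex_of_real t - w)"
  proof
    fix t
    have "cmod (complex_of_real t) \<le> cmod (complex_of_real t - w) + cmod w"
      using norm_triangle_ineq[of "complex_of_real t - w" w] by simp
    then show "(- cmod w) + t \<le> cmod (complex_of_real t - w)" by simp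
  qed
  have "filterlim (\<lambda>t. cmod (complex_of_real t - w)) at_top at_top"
    by (rule filterlim_at_top_mono[OF l1]) (use l2 in auto)
  then have "filterlim (\<lambda>t. complex_of_real t - w) at_infinity at_top"
    by (simp add: filterlim_at_infinity_conv_norm_at_top)
  then show ?thesis by (rule filterlim_compose[OF tendsto_inverse_0])
qed

lemma id1: "complex_of_real t \<noteq> w \<Longrightarrow> t * Re (inverse (complex_of_real t - w)) = 1 + Re (w * inverse (complex_of_real t - w))"
proof -
  assume ne: "complex_of_real t \<noteq> w"
  then have "complex_of_real t * inverse (complex_of_real t - w) = 1 + w * inverse (complex_of_real t - w)"
    by (simp add: field_simps)
  then have "Re (complex_of_real t * inverse (complex_of_real t - w)) = Re (1 + w * inverse (complex_of_real t - w))"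
    by simp
  then show ?thesis by simp
qed

lemma id2: "complex_of_real t \<noteq> w \<Longrightarrow> t^2 * Re (inverse (complex_of_real t - w)) = t + Re (w + w^2 * inverse (complex_of_real t - w))"
proof -
  assume ne: "complex_of_real t \<noteq> w"
  then have "complex_of_real (t^2) * inverse (complex_of_real t - w) = complex_of_real t + (w + w^2 * inverse (complex_of_real t - w))"
    by (simp add: field_simps power2_eq_square)
  then have "Re (complex_of_real (t^2) * inverse (complex_of_real t - w)) = Re (complex_of_real t + (w + w^2 * inverse (complex_of_real t - w)))"
    by simp
  then show ?thesis by simp
qed

context setting begin

lemma part_a: "length z \<le> length p"
proof -
  let ?A = "\<lambda>r t. (\<Sum>j<length r. (1 + Re (r ! j * inverse (complex_of_real t - r ! j))))"
  have lim: "(?A r \<longlongrightarrow> (\<Sum>j<length r. (1 + Re (r ! j * 0)))) at_top" for r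
    by (intro tendsto_intros inv_lim)
  have "eventually (\<lambda>t. ?A z t \<le> ?A p t) at_top"
    using ev_I_top eventually_gt_at_top[of 0]
  proof eventually_elim
    case (elim t)
    have "t * (\<Sum>j<length z. Re (inverse ((complex_of_real t - z ! j) ^ 1)))
      \<le> t * (\<Sum>i<length p. Re (inverse ((complex_of_real t - p ! i) ^ 1)))"
      using moment[OF elim(1), of 1] elim(2) by (intro mult_left_mono) auto
    also have "t * (\<Sum>i<length p. Re (inverse ((complex_of_real t - p ! i) ^ 1))) = ?A p t"
      unfolding sum_distrib_left using id1 p_ne[OF elim(1)] by simp
    also have "t * (\<Sum>j<length z. Re (inverse ((complex_of_real t - z ! j) ^ 1))) = ?A z t"
      unfolding sum_distrib_left using id1 z_ne[OF elim(1)] by simp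
    finally show ?case .
  qed
  from tendsto_le[OF trivial_limit_at_top_linorder lim[of p] lim[of z] this] show ?thesis by simp
qed

lemma part_c: assumes "length p = length z" shows "Re (sum_list z) \<le> Re (sum_list p)"
proof -
  let ?A = "\<lambda>r t. (\<Sum>j<length r. Re (r ! j + (r ! j)^2 * inverse (complex_of_real t - r ! j)))"
  have lim: "(?A r \<longlongrightarrow> (\<Sum>j<length r. Re (r ! j + (r ! j)^2 * 0))) at_top" for r
    by (intro tendsto_intros inv_lim)
  have "eventually (\<lambda>t. ?A z t \<le> ?A p t) at_top"
    using ev_I_top
  proof eventually_elim
    case (elim t)
    have "t^2 * (\<Sum>j<length z. Re (inverse ((complex_of_real t - z ! j) ^ 1)))
      \<le> t^2 * (\<Sum>i<length p. Re (inverse ((complex_of_real t - p ! i) ^ 1)))"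
      using moment[OF elim(1), of 1] by (intro mult_left_mono) auto
    also have "t^2 * (\<Sum>i<length p. Re (inverse ((complex_of_real t - p ! i) ^ 1))) = length p * t + ?A p t"
      unfolding sum_distrib_left using id2 p_ne[OF elim(1)] by (simp add: sum.distrib)
    also have "t^2 * (\<Sum>j<length z. Re (inverse ((complex_of_real t - z ! j) ^ 1))) = length z * t + ?A z t"
      unfolding sum_distrib_left using id2 z_ne[OF elim(1)] by (simp add: sum.distrib)
    finally show ?case using assms by simp
  qed
  from tendsto_le[OF trivial_limit_at_top_linorder lim[of p] lim[of z] this]
  show ?thesis by (simp add: sum_list_sum_nth atLeast0LessThan Re_sum)
qed


lemma part_b: "max_re z \<le> max_re p"
proof (rule ccontr)
  assume nle: "\<not> max_re z \<le> max_re p"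
  then have zne: "z \<noteq> []" by (auto simp: max_re_def)
  define a where "a = Max (Re ` set z)"
  have aS: "a \<in> Re ` set z" using zne unfolding a_def by (intro Max_in) auto
  have age: "\<forall>w\<in>set z. Re w \<le> a" unfolding a_def by auto
  have mz: "max_re z = ereal a"
    unfolding max_re_def using zne aS age by (auto intro!: Max_eqI)
  have aI: "a \<in> I" using nle mz by simp
  have pa: "\<forall>w\<in>set p. Re w < a" using aI max_re_less by auto
  define B where "B = (\<lambda>w. \<bar>Im w\<bar>) ` {w\<in>set z. Re w = a}"
  have Bfin: "finite B" "B \<noteq> {}" using aS unfolding B_def by auto
  define b where "b = Min B"
  obtain w0 where w0: "w0 \<in> set z" "Re w0 = a" "\<bar>Im w0\<bar> = b"
    using Min_in[OF Bfin] unfolding b_def B_def by auto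
  have bmin: "\<And>w. w \<in> set z \<Longrightarrow> Re w = a \<Longrightarrow> b \<le> \<bar>Im w\<bar>"
    unfolding b_def B_def using Bfin by (intro Min_le) (auto simp: B_def)
  have "b \<noteq> 0"
  proof
    assume "b = 0"
    then have "w0 = complex_of_real a" using w0 by (simp add: complex_eq_iff)
    moreover obtain j0 where "j0 < length z" "z ! j0 = w0" using w0(1) by (auto simp: in_set_conv_nth)
    ultimately show False using z_ne[OF aI, of j0] by simp
  qed
  then have bpos: "b > 0" using w0 by auto
  define dom where "dom w \<longleftrightarrow> Re w = a \<and> \<bar>Im w\<bar> = b" for w
  define ND where "ND = set p \<union> {w\<in>set z. \<not> dom w}"
  have ND_cases: "Re w < a \<or> (Re w = a \<and> \<bar>Im w\<bar> > b)" if wND: "w \<in> ND" for w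
  proof -
    consider "w \<in> set p" | "w \<in> set z" "\<not> dom w" using wND by (auto simp: ND_def)
    then show ?thesis
    proof cases
      case 1 then show ?thesis using pa by auto
    next
      case 2
      then have "Re w \<le> a" using age by auto
      moreover have "Re w = a \<Longrightarrow> \<bar>Im w\<bar> > b" using bmin[OF 2(1)] 2(2) by (auto simp: dom_def)
      ultimately show ?thesis by linarith
    qed
  qed
  have evw: "eventually (\<lambda>t. (t - a)^2 + b^2 < (cmod (complex_of_real t - w))^2) at_top" if "w \<in> ND" for w
  proof -
    have c2: "(cmod (complex_of_real t - w))^2 = (t - Re w)^2 + (Im w)^2" for t
      by (simp add: cmod_power2)
    from ND_cases[OF that] show ?thesis
    proof
      assume lt: "Re w < a"
      show ?thesis
        using eventually_gt_at_top[of "(a + Re w)/2 + (b^2/(a - Re w))/2"]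
      proof eventually_elim
        case (elim t)
        have gen: "q < 2*t - a - Re w" if "(a + Re w)/2 + q/2 < t" for q using that by (simp add: field_simps)
        from gen[OF elim] have "2*t - a - Re w > b^2/(a - Re w)" .
        then have "(a - Re w) * (2*t - a - Re w) > b^2" using lt by (simp add: field_simps)
        moreover have "(t - Re w)^2 - (t - a)^2 = (a - Re w) * (2*t - a - Re w)"
          by (simp add: power2_eq_square algebra_simps)
        ultimately show ?case unfolding c2 by (smt (verit) zero_le_power2)
      qed
    next
      assume h: "Re w = a \<and> \<bar>Im w\<bar> > b"
      have "b^2 < \<bar>Im w\<bar>^2" by (rule power_strict_mono) (use h bpos in auto)
      then have "b^2 < (Im w)^2" "Re w = a" using h by simp_all
      then show ?thesis unfolding c2 by simp
    qed
  qed
  have "eventually (\<lambda>t. t \<in> I \<and> (\<forall>w\<in>ND. (t - a)^2 + b^2 < (cmod (complex_of_real t - w))^2)) at_top"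
    using ev_I_top eventually_ball_finite[of ND, OF _ ballI[OF evw]]
    by (auto simp: ND_def intro: eventually_conj)
  then obtain T where T: "\<And>t. t \<ge> T \<Longrightarrow> t \<in> I \<and> (\<forall>w\<in>ND. (t - a)^2 + b^2 < (cmod (complex_of_real t - w))^2)"
    by (auto simp: eventually_at_top_linorder)
  obtain M :: nat where M: "2*pi*(T - a)/b < real M" using reals_Archimedean2 by blast
  define N where "N = max 3 M"
  have N3: "real N \<ge> 3" "real N \<ge> real M" by (auto simp: N_def)
  define x where "x = pi / real N"
  have x0: "x > 0" using N3 by (simp add: x_def)
  have x3: "x \<le> pi / 3" using N3 unfolding x_def by (intro divide_left_mono) auto
  have sx: "sin x > 0" using x0 x3 by (intro sin_gt_zero) auto
  have cx: "cos x \<ge> 1/2"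
  proof -
    have "cos (pi/3) \<le> cos x" using x0 x3 by (subst cos_mono_le_eq) auto
    then show ?thesis by (simp add: cos_60)
  qed
  have sxx: "sin x \<le> x" using x0 by (intro sin_x_le_x) auto
  define t where "t = a + b * (cos x / sin x)"
  have "(1/2) / x \<le> cos x / sin x" by (rule frac_le) (use cx sx sxx in auto)
  also have "(1/2) / x = real N / (2*pi)" by (simp add: x_def)
  finally have cot: "real N / (2*pi) \<le> cos x / sin x" .
  have "T - a < b * (real M / (2*pi))" using M bpos by (simp add: field_simps)
  also have "\<dots> \<le> b * (real N / (2*pi))" using N3 bpos by (intro mult_left_mono divide_right_mono) auto
  also have "\<dots> \<le> b * (cos x / sin x)" using cot bpos by (intro mult_left_mono) auto
  finally have "t \<ge> T" by (simp add: t_def)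
  from T[OF this] have tI: "t \<in> I" and tND: "\<And>w. w \<in> ND \<Longrightarrow> (t - a)^2 + b^2 < (cmod (complex_of_real t - w))^2"
    by auto
  define d where "d = b / sin x"
  have d0: "d > 0" using bpos sx by (simp add: d_def)
  have d2: "d^2 = (t - a)^2 + b^2"
  proof -
    have g: "B * C / S + B * S' / S = B * (C + S') / S" for B C S S' :: real
      by (simp add: add_divide_distrib distrib_left)
    have "(t - a)^2 = b^2 * (cos x)^2 / (sin x)^2" by (simp add: t_def power_divide power_mult_distrib)
    then have "(t - a)^2 + b^2 = b^2 * (cos x)^2 / (sin x)^2 + b^2 * (sin x)^2 / (sin x)^2"
      using sx by simp
    also have "\<dots> = b^2 * ((cos x)^2 + (sin x)^2) / (sin x)^2" by (rule g)
    also have "\<dots> = d^2" by (simp only: sin_cos_squared_add2) (simp add: d_def power_divide)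
    finally show ?thesis by simp
  qed
  have domeq: "complex_of_real t - w = complex_of_real d * cis (if Im w = b then - x else x)" if "dom w" for w
  proof -
    have "Re w = a" "Im w = b \<or> Im w = - b" using that by (auto simp: dom_def)
    then show ?thesis using sx
      by (auto simp: complex_eq_iff t_def d_def)
  qed
  define v where "v w = complex_of_real d * inverse (complex_of_real t - w)" for w
  define kk where "kk j = 2 * N * Suc j" for j
  have kkx: "real (kk j) * x = real (2 * Suc j) * pi" for j
  proof -
    have "real N > 0" using N3 by linarith
    then show ?thesis by (simp add: kk_def x_def field_simps)
  qed
  have vdom: "v w ^ kk j = 1" if "dom w" for w j
  proof -
    define \<theta> where "\<theta> = (if Im w = b then - x else x)"
    have "v w = inverse (cis \<theta>)" using d0 unfolding v_def domeq[OF that] \<theta>_def[symmetric]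
      by (simp add: field_simps)
    then have "v w ^ kk j = cis (- (real (kk j) * \<theta>))" by (simp add: Complex.DeMoivre)
    also have "real (kk j) * \<theta> = real (2 * Suc j) * pi \<or> real (kk j) * \<theta> = - (real (2 * Suc j) * pi)"
    proof (cases "Im w = b")
      case True
      then have "real (kk j) * \<theta> = - (real (kk j) * x)" by (simp add: \<theta>_def)
      then show ?thesis using kkx[of j] by simp
    next
      case False
      then have "real (kk j) * \<theta> = real (kk j) * x" by (simp add: \<theta>_def)
      then show ?thesis using kkx[of j] by simp
    qed
    then have "cis (- (real (kk j) * \<theta>)) = 1"
      by (auto simp: complex_eq_iff power_mult simp del: of_nat_mult of_nat_Suc)
    finally show ?thesis .
  qed
  have vnd: "cmod (v w) < 1" if "w \<in> ND" for w
  proof -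
    have "d^2 < (cmod (complex_of_real t - w))^2" using tND[OF that] d2 by simp
    then have "d < cmod (complex_of_real t - w)" by (rule power_less_imp_less_base[OF _ norm_ge_zero])
    then have lt: "d < cmod (complex_of_real t - w)" .
    have "cmod (v w) = d / cmod (complex_of_real t - w)"
      using d0 by (simp add: v_def norm_mult norm_inverse divide_inverse)
    also have "\<dots> < 1" using lt d0 by (simp add: divide_less_eq)
    finally show ?thesis .
  qed
  have reg: "Re (complex_of_real r * y) = r * Re y" for r y by simp
  have vrel: "d^k * Re (inverse ((complex_of_real t - w)^k)) = Re (v w ^ k)" for w k
  proof -
    have "v w ^ k = complex_of_real (d^k) * inverse ((complex_of_real t - w)^k)"
      by (simp add: v_def power_mult_distrib power_inverse)
    then show ?thesis by (simp only: reg)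
  qed
  have Nge: "N \<ge> 3" by (simp add: N_def)
  have mom: "(\<Sum>jj<length z. Re (v (z!jj) ^ kk j)) \<le> (\<Sum>i<length p. Re (v (p!i) ^ kk j))" for j
  proof -
    have k1: "kk j \<ge> 1" using Nge by (simp add: kk_def)
    have "d^kk j * (\<Sum>jj<length z. Re (inverse ((complex_of_real t - z!jj)^kk j)))
        \<le> d^kk j * (\<Sum>i<length p. Re (inverse ((complex_of_real t - p!i)^kk j)))"
      by (intro mult_left_mono moment[OF tI k1]) (use d0 in simp)
    then show ?thesis by (simp only: sum_distrib_left vrel)
  qed
  define L where "L w = (if dom w then 1 else (0::real))" for w
  have sm: "strict_mono kk" unfolding strict_mono_Suc_iff kk_def using Nge by simp
  have lim1: "(\<lambda>j. Re (v w ^ kk j)) \<longlonglongrightarrow> L w" if "w \<in> set z \<union> set p" for w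
  proof (cases "dom w")
    case True then show ?thesis by (simp add: vdom L_def)
  next
    case False
    then have wND: "w \<in> ND" using that by (auto simp: ND_def)
    have "(\<lambda>j. v w ^ kk j) \<longlonglongrightarrow> 0"
      using filterlim_compose[OF LIMSEQ_power_zero[OF vnd[OF wND]] filterlim_subseq[OF sm]] by simp
    then have "(\<lambda>j. Re (v w ^ kk j)) \<longlonglongrightarrow> Re 0" by (rule tendsto_Re)
    then show ?thesis using False by (simp add: L_def)
  qed
  have limz: "(\<lambda>j. \<Sum>jj<length z. Re (v (z!jj) ^ kk j)) \<longlonglongrightarrow> (\<Sum>jj<length z. L (z!jj))"
    by (intro tendsto_sum lim1) auto
  have limp: "(\<lambda>j. \<Sum>i<length p. Re (v (p!i) ^ kk j)) \<longlonglongrightarrow> (\<Sum>i<length p. L (p!i))"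
    by (intro tendsto_sum lim1) auto
  have "(\<Sum>jj<length z. L (z!jj)) \<le> (\<Sum>i<length p. L (p!i))"
    by (rule tendsto_le[OF trivial_limit_sequentially limp limz]) (use mom in auto)
  moreover have "(\<Sum>i<length p. L (p!i)) = 0"
    using pa by (auto simp: L_def dom_def intro!: sum.neutral)
  moreover have "(\<Sum>jj<length z. L (z!jj)) \<ge> 1"
  proof -
    obtain j0 where j0: "j0 < length z" "z ! j0 = w0" using w0(1) by (auto simp: in_set_conv_nth)
    have "L (z ! j0) = 1" using j0 w0 by (simp add: L_def dom_def)
    moreover have "L (z ! j0) \<le> (\<Sum>jj<length z. L (z!jj))"
      by (rule member_le_sum) (use j0 in \<open>auto simp: L_def\<close>)
    ultimately show ?thesis by simp
  qed
  ultimately show False by simp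
qed

end

theorem proposition3:
  fixes K :: real and z p :: "complex list"
  assumes "K \<noteq> 0"
    and "real_poly (root_poly z)" and "real_poly (root_poly p)"
    and "\<forall>a\<in>set z. \<forall>b\<in>set p. a \<noteq> b"
    and "LCM_on (\<lambda>s. Re (ratfun K z p (complex_of_real s))) {s. ereal s > max_re p}"
  shows "length p \<ge> length z \<and>
         max_re p \<ge> max_re z \<and>
         (length p = length z \<longrightarrow> Re (sum_list p) \<ge> Re (sum_list z))"
proof -
  interpret setting K z p using assms(2,3,5) by unfold_locales
  show ?thesis using part_a part_b part_c by auto
qed

end
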